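(* For all $R>0$ and $0<\nu<1/R$, and all integers $0\le k\le N$, $$\int_0^\nu rJ_k(rR)^2dr\ge\frac{9\nu^2}{32}\cdot\frac{(\nu R)^{2N}}{(N+1)2^{2N}(N!)^2}.$$
   Context: $J_k$ is the Bessel function of the first kind of integer order $k\ge0$, $J_k(z)=\sum_{m=0}^\infty(-1)^m\frac{(z/2)^{k+2m}}{m!\,(k+m)!}$. *)

theory Defs
  imports "HOL-Analysis.Analysis"
begin

definition besselJ :: "nat \<Rightarrow> real \<Rightarrow> real" where
  "besselJ k z = (\<Sum>m. (-1) ^ m * (z / 2) ^ (k + 2 * m) / (fact m * fact (k + m)))"

end

theory Submission
  imports Defs
begin

lemma besselJ_eq: "besselJ k = (\<lambda>z. suminf (\<lambda>m. (-1) ^ m * (z / 2) ^ (k + 2 * m) / (fact m * fact (k + m))))"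
  by (rule ext) (simp add: besselJ_def)

lemma besselJ_cont: "continuous_on {-1..1} (besselJ k)"
proof -
  have ul: "uniform_limit {-1..1::real}
     (\<lambda>n (z::real). \<Sum>i<n. (-1) ^ i * (z / 2) ^ (k + 2 * i) / (fact i * fact (k + i)))
     (\<lambda>z::real. suminf (\<lambda>i. (-1) ^ i * (z / 2) ^ (k + 2 * i) / (fact i * fact (k + i)))) sequentially"
  proof (rule Weierstrass_m_test)
    show "summable (\<lambda>n. (1/2::real) ^ n)" by (rule summable_geometric) simp
  next
    fix n and z :: real assume z: "z \<in> {-1..1}"
    have az: "\<bar>z/2\<bar> \<le> 1/2" using z by auto
    have "norm ((-1) ^ n * (z / 2) ^ (k + 2 * n) / (fact n * fact (k + n)))
        = \<bar>z/2\<bar> ^ (k + 2 * n) / (fact n * fact (k + n))"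
      by (simp add: abs_mult power_abs)
    also have "\<dots> \<le> \<bar>z/2\<bar> ^ (k + 2 * n)"
    proof -
      have "1 \<le> (fact n * fact (k + n) :: real)"
        using fact_ge_1[of n, where 'a=real] fact_ge_1[of "k+n", where 'a=real]
        by (metis mult_mono' mult_1 zero_le_one)
      then show ?thesis by (simp add: divide_le_eq mult_le_cancel_left1 zero_le_power)
    qed
    also have "\<dots> \<le> (1/2) ^ (k + 2 * n)"
      by (intro power_mono az) simp
    also have "\<dots> \<le> (1/2) ^ n"
      by (intro power_decreasing) auto
    finally show "norm ((-1) ^ n * (z / 2) ^ (k + 2 * n) / (fact n * fact (k + n))) \<le> (1/2) ^ n" .
  qed
  show ?thesis unfolding besselJ_eq
    by (rule uniform_limit_theorem[OF _ ul]) (auto intro!: always_eventually continuous_intros)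
qed

lemma besselJ_lower:
  fixes x :: real
  assumes "0 \<le> x" "x \<le> 1"
  shows "besselJ k x \<ge> 3/4 * ((x/2)^k / fact k)"
proof -
  define a where "a m = (x/2)^(k+2*m) / (fact m * fact (k+m))" for m
  have a_nonneg: "0 \<le> a m" for m using assms by (simp add: a_def)
  have q: "(x/2)^2 \<le> 1/4" using assms by (simp add: power_divide power_le_one)
  have ratio: "a (Suc m) = a m * ((x/2)^2 / ((m+1)*(k+m+1)))" for m
    by (simp add: a_def power_add power2_eq_square field_simps)
  have le4: "a (Suc m) \<le> a m / 4" for m
  proof -
    define D where "D = (real m+1)*(real k+real m+1)"
    have D1: "1 \<le> D" unfolding D_def using mult_mono[of 1 "real m+1" 1 "real k+real m+1"] by simp
    have x0: "0 \<le> (x/2)^2" by simp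
    have "(x/2)^2 \<le> (x/2)^2 * D" using D1 x0 by (simp add: mult_le_cancel_left1)
    then have "(x/2)^2 / D \<le> (x/2)^2" using D1 by (simp add: divide_le_eq)
    then have "(x/2)^2 / ((m+1)*(k+m+1)) \<le> (x/2)^2" by (simp add: D_def algebra_simps)
    then have "(x/2)^2 / ((m+1)*(k+m+1)) \<le> 1/4" using q by linarith
    then show ?thesis unfolding ratio using a_nonneg[of m]
      by (metis mult_left_mono divide_inverse inverse_eq_divide mult_1_right times_divide_eq_right)
  qed
  have mono: "a (Suc m) \<le> a m" for m using le4[of m] a_nonneg[of m] by linarith
  have geo: "a m \<le> a 0 * (1/4)^m" for m
  proof (induction m)
    case 0 then show ?case by simp
  next
    case (Suc m) then show ?case using le4[of m] by simp
  qed
  have lim: "a \<longlonglongrightarrow> 0"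
  proof (rule tendsto_sandwich[of "\<lambda>_. 0" a _ "\<lambda>m. a 0 * (1/4)^m"])
    show "(\<lambda>m. a 0 * (1/4)^m) \<longlonglongrightarrow> 0"
      by (intro tendsto_mult_right_zero LIMSEQ_power_zero) simp
  qed (auto intro: always_eventually a_nonneg geo)
  have L: "(\<Sum>i<2*1. (-1)^i*a i) \<le> (\<Sum>i. (-1)^i*a i)"
    by (rule summable_Leibniz'(2)[OF lim a_nonneg mono])
  have "besselJ k x = (\<Sum>i. (-1)^i*a i)"
    unfolding besselJ_def a_def by simp
  moreover have "(\<Sum>i<2*1. (-1)^i*a i) = a 0 - a 1"
    by (simp add: numeral_2_eq_2)
  moreover have "a 1 \<le> a 0 / 4" using le4[of 0] by simp
  moreover have "a 0 = (x/2)^k / fact k" by (simp add: a_def)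
  ultimately show ?thesis using L by linarith
qed

theorem lemma8p2:
  fixes R \<nu> :: real and k N :: nat
  assumes "R > 0" and "0 < \<nu>" and "\<nu> < 1 / R" and "k \<le> N"
  shows "integral {0..\<nu>} (\<lambda>r. r * (besselJ k (r * R))\<^sup>2)
           \<ge> 9 * \<nu>\<^sup>2 / 32 * ((\<nu> * R) ^ (2 * N) / (real (N + 1) * 2 ^ (2 * N) * (fact N)\<^sup>2))"
proof -
  define t where "t = \<nu> * R"
  have t0: "0 < t" using assms by (simp add: t_def)
  have t1: "t < 1" using assms by (simp add: t_def field_simps)
  define b where "b n = t ^ (2 * n) / (real (n + 1) * 2 ^ (2 * n) * (fact n)\<^sup>2)" for n
  have bmono: "b (Suc n) \<le> b n" for n
    unfolding b_def
  proof (rule frac_le)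
    show "0 \<le> t ^ (2 * n)" using t0 by simp
    show "t ^ (2 * Suc n) \<le> t ^ (2 * n)" using t0 t1 by (intro power_decreasing) auto
    show "0 < real (n + 1) * 2 ^ (2 * n) * (fact n)\<^sup>2" by simp
    have "(fact n :: real)\<^sup>2 \<le> (fact (Suc n))\<^sup>2"
      by (intro power_mono) (auto simp: fact_mono)
    moreover have "(2::real) ^ (2 * n) \<le> 2 ^ (2 * Suc n)" by (intro power_increasing) auto
    ultimately show "real (n + 1) * 2 ^ (2 * n) * (fact n)\<^sup>2
        \<le> real (Suc n + 1) * 2 ^ (2 * Suc n) * (fact (Suc n))\<^sup>2"
      by (intro mult_mono) auto
  qed
  have bk: "b N \<le> b k"
    using assms(4)
  proof (induction N rule: dec_induct)
    case base then show ?case by simp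
  next
    case (step n) then show ?case using bmono[of n] by linarith
  qed
  define c where "c = 9/16 * (R/2)^(2*k) / (fact k)^2"
  define g where "g r = c * r ^ (2*k+1)" for r :: real
  have gint: "(g has_integral (c * \<nu> ^ (2*k+2) / (2*k+2))) {0..\<nu>}"
  proof -
    have "(g has_integral ((\<lambda>r. c * r ^ (2*k+2) / (2*k+2)) \<nu> - (\<lambda>r. c * r ^ (2*k+2) / (2*k+2)) 0)) {0..\<nu>}"
    proof (rule fundamental_theorem_of_calculus)
      show "0 \<le> \<nu>" using assms by simp
      fix x :: real
      have "((\<lambda>r. c * r ^ (2*k+2) / (2*k+2)) has_real_derivative c * (real (2*k+2) * x ^ (2*k+2 - Suc 0)) / (2*k+2)) (at x)"
        by (intro DERIV_cdivide DERIV_cmult DERIV_pow)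
      moreover have "c * (real (2*k+2) * x ^ (2*k+2 - Suc 0)) / (2*k+2) = g x"
        unfolding g_def by simp
      ultimately have "((\<lambda>r. c * r ^ (2*k+2) / (2*k+2)) has_real_derivative g x) (at x)" by simp
      then show "((\<lambda>r. c * r ^ (2*k+2) / (2*k+2)) has_vector_derivative g x) (at x within {0..\<nu>})"
        by (simp add: has_real_derivative_iff_has_vector_derivative has_vector_derivative_at_within)
    qed
    then show ?thesis by simp
  qed
  have cont: "continuous_on {0..\<nu>} (\<lambda>r. r * (besselJ k (r * R))\<^sup>2)"
  proof -
    have "continuous_on {0..\<nu>} (\<lambda>r. besselJ k (r * R))"
    proof (rule continuous_on_compose2[OF besselJ_cont])
      show "continuous_on {0..\<nu>} (\<lambda>r. r * R)" by (intro continuous_intros)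
      show "(\<lambda>r. r * R) ` {0..\<nu>} \<subseteq> {-1..1}"
      proof
        fix y assume "y \<in> (\<lambda>r. r * R) ` {0..\<nu>}"
        then obtain r where r: "r \<in> {0..\<nu>}" "y = r * R" by auto
        have "r * R \<le> \<nu> * R" using r assms by (intro mult_right_mono) auto
        moreover have "0 \<le> r * R" using r assms by auto
        ultimately show "y \<in> {-1..1}" using r t1 t_def by auto
      qed
    qed
    then show ?thesis by (intro continuous_intros)
  qed
  have fint: "((\<lambda>r. r * (besselJ k (r * R))\<^sup>2) has_integral integral {0..\<nu>} (\<lambda>r. r * (besselJ k (r * R))\<^sup>2)) {0..\<nu>}"
    using integrable_continuous_interval[OF cont] by (simp add: has_integral_integral)
  have pt: "g r \<le> r * (besselJ k (r * R))\<^sup>2" if r: "r \<in> {0..\<nu>}" for r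
  proof -
    have rR0: "0 \<le> r * R" using r assms by auto
    have "r * R \<le> \<nu> * R" using r assms by (intro mult_right_mono) auto
    then have rR1: "r * R \<le> 1" using t1 t_def by auto
    have lo: "3/4 * ((r*R/2)^k / fact k) \<le> besselJ k (r * R)"
      by (rule besselJ_lower[OF rR0 rR1])
    have lo0: "0 \<le> 3/4 * ((r*R/2)^k / fact k)" using rR0 by simp
    have "(3/4 * ((r*R/2)^k / fact k))^2 \<le> (besselJ k (r * R))\<^sup>2"
      by (rule power_mono[OF lo lo0])
    then have "r * (3/4 * ((r*R/2)^k / fact k))^2 \<le> r * (besselJ k (r * R))\<^sup>2"
      using r by (intro mult_left_mono) auto
    moreover have "g r = r * (3/4 * ((r*R/2)^k / fact k))^2"
      unfolding g_def c_def by (simp add: power_mult_distrib power_divide power_mult field_simps)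
    ultimately show ?thesis by simp
  qed
  have I: "c * \<nu> ^ (2*k+2) / (2*k+2) \<le> integral {0..\<nu>} (\<lambda>r. r * (besselJ k (r * R))\<^sup>2)"
    by (rule has_integral_le[OF gint fint pt])
  have eq: "c * \<nu> ^ (2*k+2) / (2*k+2) = 9 * \<nu>\<^sup>2 / 32 * b k"
    unfolding c_def b_def t_def
    by (simp add: power_mult_distrib power_divide power_add power2_eq_square field_simps)
  have "9 * \<nu>\<^sup>2 / 32 * b N \<le> 9 * \<nu>\<^sup>2 / 32 * b k"
    using bk by (intro mult_left_mono) auto
  then show ?thesis using I eq unfolding b_def t_def by linarith
qed

end
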